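(* Fix $h>0$. For a positive integer $N_1$ let $N_t=4N_1$ and $$r_t(x) = \frac{xh}{\pi} \sum_{j=1}^{N_t} \frac{1}{\sqrt{jh}} \cdot \frac{e^{\sqrt{jh}-\sqrt{N_t h/4}}}{e^{2\sqrt{jh}-2\sqrt{N_t h/4}} + x}.$$ Let $p_j = -\exp\!\big(-\sigma(\sqrt{N_1}-\sqrt{j}\,)\big)$, $1\le j\le N_1$, with $\sigma = 2\sqrt{h}$. Then there exist coefficients $a_1,\dots,a_{N_1}$ and a polynomial $b$ of degree $N_2=\mathcal{O}(\sqrt{N_1}\,)$ such that the rational function $r(x)=\sum_{j=1}^{N_1}\frac{a_j}{x-p_j}+b(x)$ satisfies $$|r_t(x)-r(x)| = \mathcal{O}\big(e^{-\sqrt{N_t h/4}}\big)$$ as $N_t\to\infty$, uniformly for $x\in[0,1]$. *)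

theory Defs
  imports "HOL-Analysis.Analysis" "HOL-Computational_Algebra.Polynomial"
begin

definition Nt :: "nat \<Rightarrow> nat" where
  "Nt N1 = 4 * N1"

definition r_t :: "real \<Rightarrow> nat \<Rightarrow> real \<Rightarrow> real" where
  "r_t h N1 x = x * h / pi *
     (\<Sum>j=1..Nt N1. (1 / sqrt (real j * h)) *
        (exp (sqrt (real j * h) - sqrt (real (Nt N1) * h / 4)) /
         (exp (2 * sqrt (real j * h) - 2 * sqrt (real (Nt N1) * h / 4)) + x)))"

definition pole :: "real \<Rightarrow> nat \<Rightarrow> nat \<Rightarrow> real" where
  "pole h N1 j = - exp (- (2 * sqrt h) * (sqrt (real N1) - sqrt (real j)))"

definition r_approx :: "real \<Rightarrow> nat \<Rightarrow> (nat \<Rightarrow> real) \<Rightarrow> real poly \<Rightarrow> real \<Rightarrow> real" where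
  "r_approx h N1 a b x = (\<Sum>j=1..N1. a j / (x - pole h N1 j)) + poly b x"

end

theory Submission
  imports Defs
begin

lemma approx_poly:
  fixes q :: real
  assumes q: "q > 0"
  shows "\<exists>g::real poly. degree g \<le> n \<and>
           (\<forall>x. poly g x * (x + q) = x + q * ((1 - 2*x) / (1 + 2*q)) ^ n)"
proof -
  define L where "L = [:1/(1+2*q), -2/(1+2*q):]"
  define M where "M = [:0,1:] + smult q (L ^ n)"
  have polyL: "poly L x = (1 - 2*x) / (1 + 2*q)" for x
    using q by (simp add: L_def field_simps)
  have polyM: "poly M x = x + q * ((1 - 2*x) / (1 + 2*q)) ^ n" for x
    by (simp add: M_def polyL)
  have "poly M (-q) = 0"
    using q by (simp add: polyM)
  then have "[:- (-q), 1:] dvd M" using poly_eq_0_iff_dvd by blast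
  then obtain g where g: "M = [:q,1:] * g" by auto
  have dL: "degree L \<le> 1" by (simp add: L_def)
  have "degree (L ^ n) \<le> n"
    using degree_power_le[of L n] dL by (metis le_trans mult.commute mult_le_mono1 mult_1)
  then have dM: "degree M \<le> max 1 n"
    unfolding M_def
    by (intro degree_add_le) (auto intro: order_trans[OF degree_smult_le])
  have "degree g \<le> n"
  proof (cases "g = 0")
    case True then show ?thesis by simp
  next
    case False
    have "degree M = degree [:q,1:] + degree g" unfolding g
      by (rule degree_mult_eq) (simp_all add: False)
    then have "degree M = 1 + degree g" by simp
    then show ?thesis using dM by linarith
  qed
  moreover have "poly g x * (x + q) = x + q * ((1 - 2*x) / (1 + 2*q)) ^ n" for x
    using arg_cong[OF g, of "\<lambda>p. poly p x"] by (simp add: polyM algebra_simps)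
  ultimately show ?thesis by blast
qed

lemma nat_ceil_bounds:
  fixes y :: real assumes "0 \<le> y"
  shows "real (nat \<lceil>y\<rceil>) \<le> y + 1" "y \<le> real (nat \<lceil>y\<rceil>)"
proof -
  have e: "real (nat \<lceil>y\<rceil>) = real_of_int \<lceil>y\<rceil>" using assms by simp
  show "real (nat \<lceil>y\<rceil>) \<le> y + 1" unfolding e using of_int_ceiling_le_add_one[of y] by simp
  show "y \<le> real (nat \<lceil>y\<rceil>)" unfolding e by simp
qed

lemma div_pi_le: "0 \<le> (x::real) \<Longrightarrow> x / pi \<le> x"
  using mult_left_mono[of 1 pi x] pi_gt3 by (simp add: divide_le_eq)

definition G :: "real \<Rightarrow> nat \<Rightarrow> real poly" where
  "G q n = (SOME g. degree g \<le> n \<and>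
           (\<forall>x. poly g x * (x + q) = x + q * ((1 - 2*x) / (1 + 2*q)) ^ n))"

lemma G_prop:
  assumes "q > 0"
  shows "degree (G q n) \<le> n \<and>
           (\<forall>x. poly (G q n) x * (x + q) = x + q * ((1 - 2*x) / (1 + 2*q)) ^ n)"
  unfolding G_def by (rule someI_ex[OF approx_poly[OF assms]])

theorem lemma2p2:
  fixes h :: real
  assumes "h > 0"
  shows "\<exists>C1 C2 :: real. \<exists>N0 :: nat. \<forall>N1 \<ge> max 1 N0.
           \<exists>(a :: nat \<Rightarrow> real) (b :: real poly).
             real (degree b) \<le> C2 * sqrt (real N1) \<and>
             (\<forall>x \<in> {0..1::real}.
                \<bar>r_t h N1 x - r_approx h N1 a b x\<bar>
                  \<le> C1 * exp (- sqrt (real (Nt N1) * h / 4)))"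
proof (rule exI[of _ "8 * sqrt h"], rule exI[of _ "2 * sqrt h + 2"], rule exI[of _ 1], intro allI impI)
  fix N1 :: nat
  assume "N1 \<ge> max 1 1"
  then have N1: "N1 \<ge> 1" by simp
  define S where "S = sqrt (real N1 * h)"
  define n where "n = nat \<lceil>(2 * sqrt h + 1) * sqrt (real N1)\<rceil>"
  define e where "e j = exp (sqrt (real j * h) - S)" for j :: nat
  define q where "q j = exp (2 * sqrt (real j * h) - 2 * S)" for j :: nat
  define K where "K j = h / pi * (1 / sqrt (real j * h)) * e j" for j :: nat
  define a where "a j = - K j * q j" for j :: nat
  define b where "b = [:\<Sum>j=1..N1. K j:] + (\<Sum>j\<in>{Suc N1..4*N1}. smult (K j) (G (q j) n))"
  have qpos: "q j > 0" for j by (simp add: q_def)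
  have SNt: "sqrt (real (Nt N1) * h / 4) = S"
    by (simp add: Nt_def S_def)
  have rt: "r_t h N1 x = (\<Sum>j=1..4*N1. K j * (x / (q j + x)))" for x
    unfolding r_t_def SNt
    by (simp add: sum_distrib_left K_def e_def q_def Nt_def algebra_simps)
  have pq: "pole h N1 j = - q j" for j
  proof -
    have "sqrt (real j * h) = sqrt (real j) * sqrt h" "S = sqrt (real N1) * sqrt h"
      by (simp_all add: S_def real_sqrt_mult)
    then show ?thesis unfolding pole_def q_def by (simp add: algebra_simps)
  qed
  have ra: "r_approx h N1 a b x = (\<Sum>j=1..N1. a j / (x + q j)) + (\<Sum>j=1..N1. K j)
            + (\<Sum>j\<in>{Suc N1..4*N1}. K j * poly (G (q j) n) x)" for x
    unfolding r_approx_def b_def pq by (simp add: poly_sum)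
  have degb: "degree b \<le> n"
    unfolding b_def
  proof (rule degree_add_le)
    show "degree [:\<Sum>j=1..N1. K j:] \<le> n" by simp
    show "degree (\<Sum>j\<in>{Suc N1..4*N1}. smult (K j) (G (q j) n)) \<le> n"
      by (rule degree_sum_le) (auto intro: order_trans[OF degree_smult_le] simp: G_prop[OF qpos])
  qed
  have sN1: "sqrt (real N1) \<ge> 1" using N1 by simp
  have "real n \<le> (2 * sqrt h + 1) * sqrt (real N1) + 1"
    unfolding n_def using assms by (intro nat_ceil_bounds) simp
  also have "\<dots> \<le> (2 * sqrt h + 2) * sqrt (real N1)"
    using sN1 by (simp add: algebra_simps)
  finally have degOK: "real (degree b) \<le> (2 * sqrt h + 2) * sqrt (real N1)"
    using degb by (meson of_nat_le_iff order_trans)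
  have nge: "real n \<ge> 2 * S + sqrt (real N1)"
  proof -
    have "S = sqrt (real N1) * sqrt h" by (simp add: S_def real_sqrt_mult)
    then have "2 * S + sqrt (real N1) = (2 * sqrt h + 1) * sqrt (real N1)"
      by (simp add: algebra_simps)
    then show ?thesis unfolding n_def using assms nat_ceil_bounds(2)[of "(2 * sqrt h + 1) * sqrt (real N1)"]
      by simp
  qed
  have Kbound: "K j \<le> sqrt h * exp S" if "1 \<le> j" "j \<le> 4*N1" for j
  proof -
    have hj: "sqrt h \<le> sqrt (real j * h)" using that assms by (simp add: real_sqrt_le_mono)
    have hpos: "sqrt h > 0" using assms by simp
    have "sqrt (real j * h) \<le> sqrt (4 * real N1 * h)"
      using that assms by (intro real_sqrt_le_mono) (simp)
    also have "\<dots> = 2 * S" by (simp add: S_def real_sqrt_mult)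
    finally have "e j \<le> exp S" unfolding e_def by simp
    moreover have "h / sqrt (real j * h) \<le> sqrt h"
    proof -
      have "h / sqrt (real j * h) \<le> h / sqrt h"
        using hj hpos assms by (intro divide_left_mono) auto
      then show ?thesis using assms by (simp add: real_div_sqrt)
    qed
    moreover have "0 \<le> h / sqrt (real j * h)" using assms by simp
    ultimately have "h / pi * (1 / sqrt (real j * h)) \<le> sqrt h"
      using div_pi_le by (metis order_trans times_divide_eq_right mult_1_right divide_divide_eq_left' mult.commute)
    moreover have "e j \<ge> 0" "h / pi * (1 / sqrt (real j * h)) \<ge> 0"
      using assms by (simp_all add: e_def)
    ultimately show ?thesis unfolding K_def
      using \<open>e j \<le> exp S\<close> hpos by (meson mult_mono order_trans less_imp_le)
  qed
  have Kpos: "K j \<ge> 0" for j using assms by (simp add: K_def e_def)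
  show "\<exists>a b. real (degree b) \<le> (2 * sqrt h + 2) * sqrt (real N1) \<and>
             (\<forall>x\<in>{0..1}. \<bar>r_t h N1 x - r_approx h N1 a b x\<bar>
                  \<le> 8 * sqrt h * exp (- sqrt (real (Nt N1) * h / 4)))"
  proof (intro exI[of _ a] exI[of _ b] conjI degOK ballI)
    fix x :: real assume x: "x \<in> {0..1}"
    have split: "{1..4*N1} = {1..N1} \<union> {Suc N1..4*N1}" using N1 by auto
    have rt2: "r_t h N1 x = (\<Sum>j=1..N1. K j * (x / (q j + x)))
                 + (\<Sum>j\<in>{Suc N1..4*N1}. K j * (x / (q j + x)))"
      unfolding rt split by (rule sum.union_disjoint) auto
    have low: "K j * (x / (q j + x)) = a j / (x + q j) + K j" for j
    proof -
      have "q j + x > 0" using qpos[of j] x by simp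
      then show ?thesis unfolding a_def by (simp add: field_simps)
    qed
    define phi where "phi j = ((1 - 2*x) / (1 + 2 * q j)) ^ n" for j
    have high: "K j * (x / (q j + x)) - K j * poly (G (q j) n) x = - K j * (q j * phi j / (x + q j))" for j
    proof -
      have pos: "x + q j > 0" using qpos[of j] x by simp
      have "poly (G (q j) n) x * (x + q j) = x + q j * phi j"
        using G_prop[OF qpos[of j]] unfolding phi_def by blast
      then have "poly (G (q j) n) x = (x + q j * phi j) / (x + q j)"
        using pos by (simp add: field_simps)
      then show ?thesis using pos by (simp add: field_simps)
    qed
    have diff: "r_t h N1 x - r_approx h N1 a b x =
       (\<Sum>j\<in>{Suc N1..4*N1}. - K j * (q j * phi j / (x + q j)))"
    proof -
      have s1: "(\<Sum>j=1..N1. K j * (x / (q j + x))) = (\<Sum>j=1..N1. a j / (x + q j)) + (\<Sum>j=1..N1. K j)"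
        by (subst sum.distrib[symmetric]) (rule sum.cong[OF refl], rule low)
      have s2: "(\<Sum>j\<in>{Suc N1..4*N1}. K j * (x / (q j + x))) - (\<Sum>j\<in>{Suc N1..4*N1}. K j * poly (G (q j) n) x)
          = (\<Sum>j\<in>{Suc N1..4*N1}. - K j * (q j * phi j / (x + q j)))"
        by (subst sum_subtractf[symmetric]) (rule sum.cong[OF refl], rule high)
      show ?thesis unfolding rt2 ra using s1 s2 by linarith
    qed
    have termb: "\<bar>- K j * (q j * phi j / (x + q j))\<bar> \<le> sqrt h * exp S * exp (- real n)"
      if j: "j \<in> {Suc N1..4*N1}" for j
    proof -
      have "sqrt (real j * h) \<ge> S" unfolding S_def using j assms
        by (intro real_sqrt_le_mono) simp
      then have q1: "q j \<ge> 1" unfolding q_def by simp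
      have ax: "\<bar>1 - 2*x\<bar> \<le> 1" using x by auto
      have "\<bar>(1 - 2*x) / (1 + 2 * q j)\<bar> \<le> 1/3"
        using ax q1 by (simp add: abs_divide divide_le_eq)
      then have "\<bar>(1 - 2*x) / (1 + 2 * q j)\<bar> ^ n \<le> (1/3) ^ n"
        by (intro power_mono) simp_all
      then have "\<bar>phi j\<bar> \<le> (1/3) ^ n" unfolding phi_def by (simp only: power_abs)
      also have "(1/3::real) ^ n \<le> (1 / exp 1) ^ n"
        using exp_le by (intro power_mono) (simp_all add: divide_left_mono)
      also have "(1 / exp 1) ^ n = exp (- real n)"
        by (metis exp_minus exp_of_nat_mult inverse_eq_divide mult.commute mult_minus1 power_inverse)
      finally have ph: "\<bar>phi j\<bar> \<le> exp (- real n)" .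
      have pos: "x + q j > 0" using qpos[of j] x by simp
      have "q j / (x + q j) \<le> 1" using pos x by simp
      have eq: "\<bar>q j * phi j / (x + q j)\<bar> = (q j / (x + q j)) * \<bar>phi j\<bar>"
        using pos qpos[of j] by (simp add: abs_mult abs_divide)
      have "(q j / (x + q j)) * \<bar>phi j\<bar> \<le> 1 * exp (- real n)"
        by (rule mult_mono[OF \<open>q j / (x + q j) \<le> 1\<close> ph]) simp_all
      then have T: "\<bar>q j * phi j / (x + q j)\<bar> \<le> exp (- real n)" unfolding eq by simp
      have Kb: "K j \<le> sqrt h * exp S" using j N1 by (intro Kbound) auto
      have "\<bar>- K j * (q j * phi j / (x + q j))\<bar> = K j * \<bar>q j * phi j / (x + q j)\<bar>"
        by (simp only: abs_mult abs_minus mult_minus_left abs_of_nonneg[OF Kpos])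
      also have "\<dots> \<le> sqrt h * exp S * exp (- real n)"
        by (rule mult_mono[OF Kb T]) (simp_all add: assms less_imp_le)
      finally show ?thesis .
    qed
    have "\<bar>r_t h N1 x - r_approx h N1 a b x\<bar> \<le>
          (\<Sum>j\<in>{Suc N1..4*N1}. sqrt h * exp S * exp (- real n))"
      unfolding diff by (rule order_trans[OF sum_abs]) (rule sum_mono, rule termb)
    also have "\<dots> = real (3 * N1) * (sqrt h * exp S * exp (- real n))" by simp
    also have "\<dots> \<le> 8 * sqrt h * exp (- S)"
    proof -
      have "exp S * exp (- real n) \<le> exp (- S) * exp (- sqrt (real N1))"
        using nge by (simp add: exp_add[symmetric])
      moreover have "real N1 * exp (- sqrt (real N1)) \<le> 2"
      proof -
        have "1 + sqrt (real N1) + (sqrt (real N1))\<^sup>2 / 2 \<le> exp (sqrt (real N1))"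
          by (rule exp_lower_Taylor_quadratic) simp
        then have "1 + sqrt (real N1) + real N1 / 2 \<le> exp (sqrt (real N1))" by simp
        moreover have "0 \<le> sqrt (real N1)" by simp
        ultimately have "real N1 \<le> 2 * exp (sqrt (real N1))" by linarith
        then show ?thesis by (simp add: exp_minus field_simps)
      qed
      ultimately have A: "exp S * exp (- real n) \<le> exp (- S) * exp (- sqrt (real N1))"
        and B: "real N1 * exp (- sqrt (real N1)) \<le> 2" by blast+
      have "real N1 * (exp S * exp (- real n)) \<le> real N1 * (exp (- S) * exp (- sqrt (real N1)))"
        using A by (rule mult_left_mono) simp
      also have "\<dots> = exp (- S) * (real N1 * exp (- sqrt (real N1)))" by simp
      also have "\<dots> \<le> exp (- S) * 2" using B by (rule mult_left_mono) simp
      finally have C: "real N1 * (exp S * exp (- real n)) \<le> exp (- S) * 2" .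
      have "real (3 * N1) * (sqrt h * exp S * exp (- real n))
            = sqrt h * (3 * (real N1 * (exp S * exp (- real n))))" by simp
      also have "\<dots> \<le> sqrt h * (3 * (exp (- S) * 2))"
        using C by (intro mult_left_mono) (simp_all add: assms less_imp_le)
      also have "\<dots> \<le> 8 * sqrt h * exp (- S)" using assms by simp
      finally show ?thesis .
    qed
    finally have fin: "\<bar>r_t h N1 x - r_approx h N1 a b x\<bar> \<le> 8 * sqrt h * exp (- S)" .
    then show "\<bar>r_t h N1 x - r_approx h N1 a b x\<bar>
                  \<le> 8 * sqrt h * exp (- sqrt (real (Nt N1) * h / 4))"
      by (simp only: SNt)
  qed
qed

end
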